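(* In the binary setting, for every prior $\pi\in(0,1)$ and every $q\in[\tfrac12,1]$, the advertiser's value $U_\pi(q)=u_D-u_{ND}$ for a signal of quality $q$ satisfies $$U_\pi(q)\le (v_H-v_L)^2\,\bar f\,\Big(\tfrac23q^3-\tfrac12q^2+\tfrac1{24}\Big),\qquad\text{where }\bar f=\sup_{p\in[v_L,v_H]}f(p).$$
   Context: Binary setting: a single advertiser bids in a second-price auction. The user is of type $H$ with prior $\pi\in(0,1)$ and of type $L$ otherwise; values $v_H>v_L\ge0$. The highest competing bid is independent of the type with density $f$ and cdf $F$. Without data she bids $\bar v=\pi v_H+(1-\pi)v_L$ (expected utility $u_{ND}$). A signal $s\in\{h,\ell\}$ of quality $q$ has $\Pr[s=h\mid H]=\Pr[s=\ell\mid L]=q$, independent of the competing bid given the type; with it she bids the posterior expected value $v|s$, where $\pi|h=\frac{\pi q}{\pi q+(1-\pi)(1-q)}$, $\pi|\ell=\frac{\pi(1-q)}{\pi(1-q)+(1-\pi)q}$, $v|s=(\pi|s)v_H+(1-\pi|s)v_L$ (expected utility $u_D$). *)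

theory Defs
  imports "HOL-Analysis.Analysis"
begin

text \<open>Expected utility in a second-price auction of an advertiser whose (expected) value
  is w and who bids b, when the highest competing bid has density f supported on [0,inf):
  she wins iff the competing bid p is below b and then pays p.\<close>
definition spa_util :: "(real \<Rightarrow> real) \<Rightarrow> real \<Rightarrow> real \<Rightarrow> real" where
  "spa_util f w b = integral {0..b} (\<lambda>p. (w - p) * f p)"

definition post_h :: "real \<Rightarrow> real \<Rightarrow> real" where
  "post_h \<pi> q = \<pi> * q / (\<pi> * q + (1 - \<pi>) * (1 - q))"

definition post_l :: "real \<Rightarrow> real \<Rightarrow> real" where
  "post_l \<pi> q = \<pi> * (1 - q) / (\<pi> * (1 - q) + (1 - \<pi>) * q)"

definition exp_val :: "real \<Rightarrow> real \<Rightarrow> real \<Rightarrow> real" where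
  "exp_val vH vL \<rho> = \<rho> * vH + (1 - \<rho>) * vL"

definition u_ND :: "(real \<Rightarrow> real) \<Rightarrow> real \<Rightarrow> real \<Rightarrow> real \<Rightarrow> real" where
  "u_ND f vH vL \<pi> = spa_util f (exp_val vH vL \<pi>) (exp_val vH vL \<pi>)"

definition u_D :: "(real \<Rightarrow> real) \<Rightarrow> real \<Rightarrow> real \<Rightarrow> real \<Rightarrow> real \<Rightarrow> real" where
  "u_D f vH vL \<pi> q =
     (\<pi> * q + (1 - \<pi>) * (1 - q)) *
        spa_util f (exp_val vH vL (post_h \<pi> q)) (exp_val vH vL (post_h \<pi> q))
   + (\<pi> * (1 - q) + (1 - \<pi>) * q) *
        spa_util f (exp_val vH vL (post_l \<pi> q)) (exp_val vH vL (post_l \<pi> q))"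

definition data_value :: "(real \<Rightarrow> real) \<Rightarrow> real \<Rightarrow> real \<Rightarrow> real \<Rightarrow> real \<Rightarrow> real" where
  "data_value f vH vL \<pi> q = u_D f vH vL \<pi> q - u_ND f vH vL \<pi>"

end

theory Submission
  imports Defs
begin
lemma prodint:
  fixes f :: "real \<Rightarrow> real"
  assumes "f integrable_on UNIV" "\<And>p. f p \<ge> 0"
  shows "(\<lambda>p. (w - p) * f p) integrable_on {a..b}"
proof -
  have fi: "f absolutely_integrable_on {a..b}"
    by (rule nonnegative_absolutely_integrable) (auto intro: integrable_on_subinterval[OF assms(1)] assms(2))
  have "(\<lambda>p. (w - p) * f p) absolutely_integrable_on {a..b}"
  proof (rule absolutely_integrable_bounded_measurable_product_real[OF _ _ _ fi])
    show "(\<lambda>p. w - p) \<in> borel_measurable (lebesgue_on {a..b})"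
      by (rule continuous_imp_measurable_on_sets_lebesgue) (auto intro!: continuous_intros)
    show "{a..b} \<in> sets lebesgue" by simp
    show "bounded ((\<lambda>p. w - p) ` {a..b})"
      by (intro compact_imp_bounded compact_continuous_image) (auto intro!: continuous_intros)
  qed
  then show ?thesis using absolutely_integrable_on_def by blast
qed

lemma linint:
  fixes c w M :: real
  assumes "c \<le> w"
  shows "((\<lambda>p. (w - p) * M) has_integral M * (w - c)^2 / 2) {c..w}"
proof -
  have "((\<lambda>p. (w - p) * M) has_integral (- M * (w - w)^2/2) - (- M * (w - c)^2/2)) {c..w}"
    apply (rule fundamental_theorem_of_calculus[OF assms])
    apply (subst has_real_derivative_iff_has_vector_derivative[symmetric])
    apply (auto intro!: derivative_eq_intros simp: power2_eq_square algebra_simps)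
    apply (auto simp: field_simps)
    done
  then show ?thesis by simp
qed

lemma linint2:
  fixes c w M :: real
  assumes "w \<le> c"
  shows "((\<lambda>p. (p - w) * M) has_integral M * (w - c)^2 / 2) {w..c}"
proof -
  have "((\<lambda>p. (p - w) * M) has_integral (M * (c - w)^2/2) - (M * (w - w)^2/2)) {w..c}"
    apply (rule fundamental_theorem_of_calculus[OF assms])
    apply (subst has_real_derivative_iff_has_vector_derivative[symmetric])
    apply (auto intro!: derivative_eq_intros simp: power2_eq_square algebra_simps)
    apply (auto simp: field_simps)
    done
  then show ?thesis by (simp add: power2_commute)
qed


lemma taylor:
  fixes f :: "real \<Rightarrow> real" and M c w vL vH :: real
  assumes fn: "\<And>p. f p \<ge> 0" and fint: "f integrable_on UNIV"
    and fM: "\<And>p. p \<in> {vL..vH} \<Longrightarrow> f p \<le> M" and vL: "0 \<le> vL"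
    and c: "c \<in> {vL..vH}" and w: "w \<in> {vL..vH}"
  shows "spa_util f w w - spa_util f c c - (w - c) * integral {0..c} f \<le> M/2*(w-c)^2"
proof -
  let ?h = "\<lambda>p. (w - p) * f p"
  have hi: "\<And>a b. ?h integrable_on {a..b}" by (rule prodint[OF fint fn])
  have fi: "f integrable_on {0..c}" by (rule integrable_on_subinterval[OF fint]) auto
  have "integral {0..c} ?h = integral {0..c} (\<lambda>p. (c-p)*f p + (w-c)*f p)"
    by (rule integral_cong) (simp add: algebra_simps)
  also have "\<dots> = integral {0..c} (\<lambda>p. (c-p)*f p) + integral {0..c} (\<lambda>p. (w-c)*f p)"
    by (rule integral_add[OF prodint[OF fint fn] integrable_on_mult_right[OF fi]])
  also have "\<dots> = spa_util f c c + (w - c) * integral {0..c} f"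
    by (simp add: spa_util_def)
  finally have e1: "spa_util f c c + (w - c) * integral {0..c} f = integral {0..c} ?h" by simp
  have 0: "0 \<le> c" "0 \<le> w" using c w vL by auto
  show ?thesis
  proof (cases "c \<le> w")
    case True
    have "integral {0..c} ?h + integral {c..w} ?h = integral {0..w} ?h"
      by (rule Henstock_Kurzweil_Integration.integral_combine[OF 0(1) True hi])
    moreover have "integral {c..w} ?h \<le> integral {c..w} (\<lambda>p. (w - p) * M)"
    proof (rule integral_le[OF hi])
      show "(\<lambda>p. (w - p) * M) integrable_on {c..w}" using linint[OF True] by blast
      fix p assume "p \<in> {c..w}"
      then show "?h p \<le> (w - p) * M" using fM[of p] c w by (auto intro!: mult_left_mono)
    qed
    moreover have "integral {c..w} (\<lambda>p. (w - p) * M) = M * (w - c)^2 / 2"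
      using linint[OF True] by (rule integral_unique)
    ultimately show ?thesis using e1 unfolding spa_util_def by linarith
  next
    case False
    then have F: "w \<le> c" by simp
    have "integral {0..w} ?h + integral {w..c} ?h = integral {0..c} ?h"
      by (rule Henstock_Kurzweil_Integration.integral_combine[OF 0(2) F hi])
    moreover have "integral {w..c} (\<lambda>p. - ?h p) \<le> integral {w..c} (\<lambda>p. (p - w) * M)"
    proof (rule integral_le)
      show "(\<lambda>p. - ?h p) integrable_on {w..c}" using hi integrable_neg by blast
      show "(\<lambda>p. (p - w) * M) integrable_on {w..c}" using linint2[OF F] by blast
      fix p assume "p \<in> {w..c}"
      then have "p - w \<ge> 0" "f p \<le> M" using fM[of p] c w by auto
      then have "(p - w) * f p \<le> (p - w) * M" by (rule mult_left_mono[rotated])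
      then show "- ?h p \<le> (p - w) * M" by (simp add: algebra_simps)
    qed
    moreover have "integral {w..c} (\<lambda>p. (p - w) * M) = M * (w - c)^2 / 2"
      using linint2[OF F] by (rule integral_unique)
    moreover have "integral {w..c} (\<lambda>p. - ?h p) = - integral {w..c} ?h"
      by (rule integral_neg)
    ultimately show ?thesis using e1 unfolding spa_util_def by linarith
  qed
qed

theorem mainTheorem15:
  fixes f :: "real \<Rightarrow> real" and vH vL \<pi> q :: real
  assumes f_nonneg: "\<And>p. f p \<ge> 0"
    and f_support: "\<And>p. p < 0 \<Longrightarrow> f p = 0"
    and f_int: "f integrable_on UNIV"
    and f_total: "integral UNIV f = 1"
    and f_bdd: "bdd_above (f ` {vL..vH})"
    and vals: "vH > vL" "vL \<ge> 0"
    and prior: "0 < \<pi>" "\<pi> < 1"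
    and quality: "1/2 \<le> q" "q \<le> 1"
  shows "data_value f vH vL \<pi> q
     \<le> (vH - vL)^2 * (SUP p\<in>{vL..vH}. f p) * (2/3 * q^3 - 1/2 * q^2 + 1/24)"
proof -
  define M where "M = (SUP p\<in>{vL..vH}. f p)"
  have fM: "\<And>p. p \<in> {vL..vH} \<Longrightarrow> f p \<le> M"
    unfolding M_def by (rule cSUP_upper[OF _ f_bdd])
  have M0: "0 \<le> M" using fM[of vL] f_nonneg[of vL] vals by auto
  define a where "a = \<pi> * q + (1 - \<pi>) * (1 - q)"
  define b where "b = \<pi> * (1 - q) + (1 - \<pi>) * q"
  define rh where "rh = post_h \<pi> q"
  define rl where "rl = post_l \<pi> q"
  define d where "d = 2 * q - 1"
  define g where "g = (\<lambda>w. spa_util f w w)"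
  define c where "c = exp_val vH vL \<pi>"
  define wh where "wh = exp_val vH vL rh"
  define wl where "wl = exp_val vH vL rl"
  define F where "F = integral {0..c} f"
  have apos: "a > 0" unfolding a_def using prior quality
    by (simp add: add_pos_nonneg)
  have bpos: "b > 0" unfolding b_def using prior quality
    by (simp add: add_nonneg_pos)
  have ab1: "a + b = 1" unfolding a_def b_def by algebra
  have rh_eq: "a * rh = \<pi> * q" unfolding rh_def post_h_def a_def[symmetric] using apos by simp
  have rl_eq: "b * rl = \<pi> * (1 - q)" unfolding rl_def post_l_def b_def[symmetric] using bpos by simp
  have "\<pi> * q \<le> a" unfolding a_def using prior quality by simp
  then have rh01: "0 \<le> rh" "rh \<le> 1"
    unfolding rh_def post_h_def a_def[symmetric] using apos prior quality by auto
  have "\<pi> * (1 - q) \<le> b" unfolding b_def using prior quality by simp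
  then have rl01: "0 \<le> rl" "rl \<le> 1"
    unfolding rl_def post_l_def b_def[symmetric] using bpos prior quality by auto
  have vpos: "0 < vH - vL" using vals by simp
  have wh_eq: "wh = vL + rh * (vH - vL)" by (simp add: wh_def exp_val_def algebra_simps)
  have wl_eq: "wl = vL + rl * (vH - vL)" by (simp add: wl_def exp_val_def algebra_simps)
  have c_eq: "c = vL + \<pi> * (vH - vL)" by (simp add: c_def exp_val_def algebra_simps)
  have inI: "\<And>r. 0 \<le> r \<Longrightarrow> r \<le> 1 \<Longrightarrow> vL + r * (vH - vL) \<in> {vL..vH}"
  proof -
    fix r :: real assume r: "0 \<le> r" "r \<le> 1"
    have "0 \<le> r * (vH - vL)" using r vpos by simp
    moreover have "r * (vH - vL) \<le> vH - vL" using r vpos by (simp add: mult_left_le_one_le)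
    ultimately show "vL + r * (vH - vL) \<in> {vL..vH}" by auto
  qed
  have wh_in: "wh \<in> {vL..vH}" using inI[OF rh01] wh_eq by simp
  have wl_in: "wl \<in> {vL..vH}" using inI[OF rl01] wl_eq by simp
  have c_in: "c \<in> {vL..vH}" using inI[of \<pi>] c_eq prior by simp
  have mart: "a * (wh - c) + b * (wl - c) = 0"
  proof -
    have "a * (wh - c) + b * (wl - c) = (a * rh + b * rl - (a + b) * \<pi>) * (vH - vL)"
      by (simp add: wh_eq wl_eq c_eq algebra_simps)
    also have "\<dots> = 0" by (simp add: rh_eq rl_eq ab1 algebra_simps)
    finally show ?thesis .
  qed
  have dv: "data_value f vH vL \<pi> q = a * g wh + b * g wl - g c"
    by (simp add: data_value_def u_D_def u_ND_def g_def wh_def wl_def c_def rh_def rl_def a_def b_def)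
  have th: "g wh - g c - (wh - c) * F \<le> M/2*(wh-c)^2"
    unfolding g_def F_def by (rule taylor[OF f_nonneg f_int fM vals(2) c_in wh_in])
  have tl: "g wl - g c - (wl - c) * F \<le> M/2*(wl-c)^2"
    unfolding g_def F_def by (rule taylor[OF f_nonneg f_int fM vals(2) c_in wl_in])
  have "data_value f vH vL \<pi> q = a * (g wh - g c - (wh - c) * F) + b * (g wl - g c - (wl - c) * F)
        + F * (a * (wh - c) + b * (wl - c))"
    unfolding dv using ab1 by (simp add: algebra_simps) (metis add_diff_cancel_left' distrib_right mult_1)
  also have "\<dots> \<le> a * (M/2*(wh-c)^2) + b * (M/2*(wl-c)^2)"
    using mult_left_mono[OF th less_imp_le[OF apos]] mult_left_mono[OF tl less_imp_le[OF bpos]] mart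
    by simp
  also have "\<dots> = M/2 * (vH - vL)^2 * (a * (rh - \<pi>)^2 + b * (rl - \<pi>)^2)"
    by (simp add: wh_eq wl_eq c_eq power2_eq_square algebra_simps)
  finally have step1: "data_value f vH vL \<pi> q \<le> M/2 * (vH - vL)^2 * (a * (rh - \<pi>)^2 + b * (rl - \<pi>)^2)" .
  define K where "K = \<pi> * (1 - \<pi>) * d"
  have ah: "a * (rh - \<pi>) = K"
  proof -
    have "a * (rh - \<pi>) = a * rh - a * \<pi>" by algebra
    also have "\<dots> = \<pi> * q - a * \<pi>" using rh_eq by simp
    also have "\<dots> = K" unfolding a_def K_def d_def by algebra
    finally show ?thesis .
  qed
  have bl: "b * (rl - \<pi>) = - K"
  proof -
    have "b * (rl - \<pi>) = b * rl - b * \<pi>" by algebra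
    also have "\<dots> = \<pi> * (1 - q) - b * \<pi>" using rl_eq by simp
    also have "\<dots> = - K" unfolding b_def K_def d_def by algebra
    finally show ?thesis .
  qed
  have "a * (rh - \<pi>)^2 = (a * (rh - \<pi>))^2 / a" using apos by (simp add: power2_eq_square field_simps)
  then have "a * (rh - \<pi>)^2 = K^2 / a" using ah by simp
  moreover have "b * (rl - \<pi>)^2 = (b * (rl - \<pi>))^2 / b" using bpos by (simp add: power2_eq_square field_simps)
  then have "b * (rl - \<pi>)^2 = K^2 / b" using bl by simp
  ultimately have V: "a * (rh - \<pi>)^2 + b * (rl - \<pi>)^2 = K^2 / (a * b)"
    using apos bpos ab1 by (simp add: field_simps) (metis distrib_left mult.commute mult_1)
  have abid: "a * b = \<pi> * (1 - \<pi>) + (2 * \<pi> - 1)^2 * (q * (1 - q))"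
    unfolding a_def b_def by (simp add: power2_eq_square algebra_simps)
  have "0 \<le> (2 * \<pi> - 1)^2 * (q * (1 - q))" using quality by simp
  then have ab_ge: "\<pi> * (1 - \<pi>) \<le> a * b" using abid by linarith
  have pp: "4 * (\<pi> * (1 - \<pi>))^2 \<le> \<pi> * (1 - \<pi>)"
  proof -
    have "0 \<le> \<pi> * (1 - \<pi>)" using prior by simp
    moreover have "4 * (\<pi> * (1 - \<pi>)) \<le> 1"
    proof -
      have "0 \<le> (2*\<pi> - 1)^2" by simp
      moreover have "(2*\<pi> - 1)^2 = 1 - 4 * (\<pi> * (1 - \<pi>))" by (simp add: power2_eq_square algebra_simps)
      ultimately show ?thesis by linarith
    qed
    ultimately show ?thesis using mult_right_mono[of "4*(\<pi>*(1-\<pi>))" 1 "\<pi>*(1-\<pi>)"]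
      by (simp add: power2_eq_square mult.assoc)
  qed
  have "K^2 = (\<pi> * (1 - \<pi>))^2 * d^2" unfolding K_def by (simp add: power_mult_distrib)
  also have "\<dots> \<le> (a * b / 4) * d^2" using pp ab_ge by (intro mult_right_mono) auto
  finally have "K^2 / (a * b) \<le> d^2 / 4" using apos bpos by (simp add: divide_le_eq field_simps)
  then have Vb: "a * (rh - \<pi>)^2 + b * (rl - \<pi>)^2 \<le> d^2 / 4" using V by simp
  have "M/2 * (vH - vL)^2 * (a * (rh - \<pi>)^2 + b * (rl - \<pi>)^2) \<le> M/2 * (vH - vL)^2 * (d^2/4)"
    using Vb M0 by (intro mult_left_mono) auto
  also have "\<dots> \<le> (vH - vL)^2 * M * (2/3 * q^3 - 1/2 * q^2 + 1/24)"
  proof -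
    have "d^2/8 \<le> 2/3 * q^3 - 1/2 * q^2 + 1/24"
    proof -
      have "2/3 * q^3 - 1/2 * q^2 + 1/24 - d^2/8 = 2/3 * (q - 1/2)^3"
        unfolding d_def by (simp add: power2_eq_square power3_eq_cube field_simps)
      moreover have "0 \<le> (q - 1/2)^3" using quality by simp
      ultimately show ?thesis by linarith
    qed
    then have "(vH - vL)^2 * M * (d^2/8) \<le> (vH - vL)^2 * M * (2/3 * q^3 - 1/2 * q^2 + 1/24)"
      using M0 by (intro mult_left_mono) auto
    then show ?thesis by (simp add: algebra_simps)
  qed
  finally show ?thesis using step1 unfolding M_def by linarith
qed

end
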